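(* Let $X$ be a finite set with $n=|X|$, let $r\ge 2$, and let $\tau$ be a non-empty subset of $\binom{X}{r}$ with $L(\tau)=X$. If $\tau$ is thin, then: (i) $|\tau|\le n-r+1$; (ii) there exists $x\in X$ with $n_\tau(x)\le r-1$; (iii) for any subset $B\subseteq X$ with $|B|=r-1$, the (multi)collection of sets $\{S-B : S\in\tau\}$ has a system of distinct representatives.
   Context: $\binom{X}{r}$ denotes the set of $r$-element subsets of $X$. For a collection $\tau$ of subsets of $X$, $L(\tau)=\bigcup_{s\in\tau}s$. For $\tau\subseteq\binom{X}{r}$ non-empty, the excess is ${\rm exc}(\tau)=|L(\tau)|-|\tau|-(r-1)$, and $\tau$ is thin if ${\rm exc}(\tau')\ge 0$ for every non-empty $\tau'\subseteq\tau$. For $x\in X$, $n_\tau(x)$ is the number of sets in $\tau$ containing $x$. A collection of (not necessarily distinct) sets $B_1,\dots,B_m$ has a system of distinct representatives if one can choose $x_i\in B_i$ for each $i$ with $x_1,\dots,x_m$ pairwise distinct. *)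

theory Defs
  imports Main
begin

definition r_subsets :: "'a set \<Rightarrow> nat \<Rightarrow> 'a set set" where
  "r_subsets X r = {S. S \<subseteq> X \<and> card S = r}"

definition L :: "'a set set \<Rightarrow> 'a set" where
  "L \<tau> = \<Union>\<tau>"

definition exc :: "nat \<Rightarrow> 'a set set \<Rightarrow> int" where
  "exc r \<tau> = int (card (L \<tau>)) - int (card \<tau>) - (int r - 1)"

definition thin :: "nat \<Rightarrow> 'a set set \<Rightarrow> bool" where
  "thin r \<tau> \<longleftrightarrow> (\<forall>\<tau>'. \<tau>' \<subseteq> \<tau> \<and> \<tau>' \<noteq> {} \<longrightarrow> exc r \<tau>' \<ge> 0)"

definition n_count :: "'a set set \<Rightarrow> 'a \<Rightarrow> nat" where
  "n_count \<tau> x = card {s \<in> \<tau>. x \<in> s}"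

text \<open>A family of (not necessarily distinct) sets indexed by I has an SDR.\<close>
definition has_sdr :: "'i set \<Rightarrow> ('i \<Rightarrow> 'a set) \<Rightarrow> bool" where
  "has_sdr I B \<longleftrightarrow> (\<exists>rep. inj_on rep I \<and> (\<forall>i\<in>I. rep i \<in> B i))"

end

theory Submission imports Defs begin

lemma hall_aux:
  "\<forall>(I::'i set) (A::'i \<Rightarrow> 'a set). finite I \<longrightarrow> card I = m \<longrightarrow> (\<forall>i\<in>I. finite (A i))
     \<longrightarrow> (\<forall>J\<subseteq>I. card J \<le> card (\<Union>(A`J)))
     \<longrightarrow> (\<exists>rep. inj_on rep I \<and> (\<forall>i\<in>I. rep i \<in> A i))"
proof (induction m rule: less_induct)
  case (less m)
  show ?case
  proof (intro allI impI)
    fix I :: "'i set" and A :: "'i \<Rightarrow> 'a set"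
    assume fin: "finite I" and cI: "card I = m" and finA: "\<forall>i\<in>I. finite (A i)"
      and hall: "\<forall>J\<subseteq>I. card J \<le> card (\<Union>(A`J))"
    have IH: "\<exists>rep. inj_on rep I' \<and> (\<forall>i\<in>I'. rep i \<in> A' i)"
      if a: "finite I'" "card I' < m" "\<forall>i\<in>I'. finite (A' i)" "\<forall>J\<subseteq>I'. card J \<le> card (\<Union>(A'`J))"
      for I' :: "'i set" and A' :: "'i \<Rightarrow> 'a set"
      using less[OF a(2), THEN spec[of _ I'], THEN spec[of _ A']] a by simp
    show "\<exists>rep. inj_on rep I \<and> (\<forall>i\<in>I. rep i \<in> A i)"
    proof (cases "I = {}")
      case True then show ?thesis by auto
    next
      case False
      show ?thesis
      proof (cases "\<exists>J. J \<subseteq> I \<and> J \<noteq> {} \<and> J \<noteq> I \<and> card (\<Union>(A`J)) = card J")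
        case True
        then obtain J where J: "J \<subseteq> I" "J \<noteq> {}" "J \<noteq> I" "card (\<Union>(A`J)) = card J" by blast
        define U where "U = \<Union>(A`J)"
        have finJ: "finite J" using J(1) fin by (rule finite_subset)
        have finU: "finite U" unfolding U_def
        proof (rule finite_UN_I[OF finJ])
          fix i assume "i \<in> J" then show "finite (A i)" using finA J(1) by blast
        qed
        have "J \<subset> I" using J(1,3) by blast
        then have cJ: "card J < m" using cI psubset_card_mono[OF fin] by blast
        obtain r1 where r1: "inj_on r1 J" "\<forall>i\<in>J. r1 i \<in> A i"
        proof -
          have h: "\<forall>K\<subseteq>J. card K \<le> card (\<Union>(A`K))" using hall J(1) by blast
          have f: "\<forall>i\<in>J. finite (A i)" using finA J(1) by blast
          show ?thesis using IH[OF finJ cJ f h] that by blast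
        qed
        define A2 where "A2 = (\<lambda>i. A i - U)"
        have "card J > 0" using finJ J by auto
        moreover have "m > 0" using fin cI J(1,2) by (metis card_gt_0_iff subset_empty)
        ultimately have c2: "card (I - J) < m" using J fin cI by (simp add: card_Diff_subset finJ)
        have hall2: "\<forall>K\<subseteq>I-J. card K \<le> card (\<Union>(A2`K))"
        proof (intro allI impI)
          fix K assume K: "K \<subseteq> I - J"
          have "K \<subseteq> I" using K by blast
          then have finK: "finite K" using fin by (rule finite_subset)
          have eq: "\<Union>(A2`K) = \<Union>(A`(K \<union> J)) - U" unfolding A2_def U_def by auto
          have sub: "U \<subseteq> \<Union>(A`(K\<union>J))" by (auto simp: U_def)
          have "card (\<Union>(A2`K)) = card (\<Union>(A`(K\<union>J))) - card U"
            unfolding eq by (rule card_Diff_subset[OF finU sub])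
          moreover have "K \<union> J \<subseteq> I" using K J(1) by blast
          then have "card (K \<union> J) \<le> card (\<Union>(A`(K\<union>J)))" using hall by blast
          moreover have "card (K \<union> J) = card K + card J" using K finK finJ
            by (subst card_Un_disjoint) auto
          moreover have "card U = card J" using J U_def by simp
          ultimately show "card K \<le> card (\<Union>(A2`K))" by linarith
        qed
        obtain r2 where r2: "inj_on r2 (I-J)" "\<forall>i\<in>I-J. r2 i \<in> A2 i"
        proof -
          have f: "\<forall>i\<in>I-J. finite (A2 i)" using finA by (simp add: A2_def)
          show ?thesis using IH[OF _ c2 f hall2] fin that by blast
        qed
        define rep where "rep = (\<lambda>i. if i \<in> J then r1 i else r2 i)"
        show ?thesis
        proof (intro exI conjI)
          show "inj_on rep I" unfolding inj_on_def
          proof (intro ballI impI)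
            fix x y assume xy: "x \<in> I" "y \<in> I" "rep x = rep y"
            have inU: "i \<in> J \<Longrightarrow> r1 i \<in> U" for i using r1 by (auto simp: U_def)
            have notU: "i \<in> I - J \<Longrightarrow> r2 i \<notin> U" for i using r2 by (auto simp: A2_def)
            show "x = y"
            proof (cases "x \<in> J"; cases "y \<in> J")
              assume "x \<in> J" "y \<in> J" then show ?thesis using xy r1 by (auto simp: rep_def inj_on_def)
            next
              assume "x \<in> J" "y \<notin> J" then show ?thesis using xy inU[of x] notU[of y] by (auto simp: rep_def)
            next
              assume "x \<notin> J" "y \<in> J" then show ?thesis using xy inU[of y] notU[of x] by (auto simp: rep_def)
            next
              assume "x \<notin> J" "y \<notin> J" then show ?thesis using xy r2 by (auto simp: rep_def inj_on_def)
            qed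
          qed
          show "\<forall>i\<in>I. rep i \<in> A i" using r1 r2 by (auto simp: rep_def A2_def)
        qed
      next
        case False
        then have strict: "\<And>J. J \<subseteq> I \<Longrightarrow> J \<noteq> {} \<Longrightarrow> J \<noteq> I \<Longrightarrow> card J < card (\<Union>(A`J))"
        proof -
          fix J assume a: "J \<subseteq> I" "J \<noteq> {}" "J \<noteq> I"
          have "card J \<le> card (\<Union>(A`J))" using hall a(1) by blast
          moreover have "card (\<Union>(A`J)) \<noteq> card J" using False a by blast
          ultimately show "card J < card (\<Union>(A`J))" by simp
        qed
        obtain i0 where i0: "i0 \<in> I" using \<open>I \<noteq> {}\<close> by auto
        have "card {i0} \<le> card (\<Union>(A`{i0}))" using hall i0 by blast
        then have "A i0 \<noteq> {}" by auto
        then obtain x where x: "x \<in> A i0" by auto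
        define A2 where "A2 = (\<lambda>i. A i - {x})"
        have c2: "card (I - {i0}) < m" using i0 fin cI
          by (metis card_Diff1_less)
        have hall2: "\<forall>K\<subseteq>I-{i0}. card K \<le> card (\<Union>(A2`K))"
        proof (intro allI impI)
          fix K assume K: "K \<subseteq> I - {i0}"
          show "card K \<le> card (\<Union>(A2`K))"
          proof (cases "K = {}")
            case True then show ?thesis by simp
          next
            case False
            have "K \<noteq> I" using K i0 by auto
            have KI: "K \<subseteq> I" using K by blast
            have lt: "card K < card (\<Union>(A`K))" using strict[OF KI False \<open>K \<noteq> I\<close>] .
            have finK: "finite K" using KI fin by (rule finite_subset)
            have finU: "finite (\<Union>(A`K))"
            proof (rule finite_UN_I[OF finK])
              fix i assume "i \<in> K" then show "finite (A i)" using finA KI by blast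
            qed
            have eq: "\<Union>(A2`K) = \<Union>(A`K) - {x}" unfolding A2_def by auto
            show ?thesis using lt by (simp only: eq card_Diff_singleton_if) auto
          qed
        qed
        obtain r2 where r2: "inj_on r2 (I-{i0})" "\<forall>i\<in>I-{i0}. r2 i \<in> A2 i"
        proof -
          have f: "\<forall>i\<in>I-{i0}. finite (A2 i)" using finA by (simp add: A2_def)
          show ?thesis using IH[OF _ c2 f hall2] fin that by blast
        qed
        define rep where "rep = r2(i0 := x)"
        show ?thesis
        proof (intro exI conjI)
          show "inj_on rep I" unfolding inj_on_def
          proof (intro ballI impI)
            fix a b assume ab: "a \<in> I" "b \<in> I" "rep a = rep b"
            have nx: "i \<in> I - {i0} \<Longrightarrow> r2 i \<noteq> x" for i using r2 by (auto simp: A2_def)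
            show "a = b" using ab nx[of a] nx[of b] r2(1)
              by (auto simp: rep_def inj_on_def split: if_splits)
          qed
          show "\<forall>i\<in>I. rep i \<in> A i" using r2 x by (auto simp: rep_def A2_def)
        qed
      qed
    qed
  qed
qed

lemma hall:
  assumes "finite I" "\<forall>i\<in>I. finite (A i)" "\<forall>J\<subseteq>I. card J \<le> card (\<Union>(A`J))"
  shows "\<exists>rep. inj_on rep I \<and> (\<forall>i\<in>I. rep i \<in> A i)"
  using hall_aux assms by blast

lemma sum_ncount:
  assumes "finite X" "\<tau> \<subseteq> r_subsets X r"
  shows "(\<Sum>x\<in>X. n_count \<tau> x) = r * card \<tau>"
proof -
  have "\<tau> \<subseteq> Pow X" using assms(2) by (auto simp: r_subsets_def)
  then have ft: "finite \<tau>" using finite_subset assms(1) by (metis finite_Pow_iff)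
  have "(\<Sum>x\<in>X. n_count \<tau> x) = (\<Sum>x\<in>X. \<Sum>S\<in>\<tau>. if x \<in> S then 1 else 0)"
  proof (rule sum.cong)
    fix x assume "x \<in> X"
    have "n_count \<tau> x = (\<Sum>S\<in>{S \<in> \<tau>. x \<in> S}. 1)" unfolding n_count_def by (rule card_eq_sum)
    also have "\<dots> = (\<Sum>S\<in>\<tau>. if x \<in> S then 1 else 0)" by (rule sum.inter_filter[OF ft])
    finally show "n_count \<tau> x = (\<Sum>S\<in>\<tau>. if x \<in> S then 1 else 0)" .
  qed simp
  also have "\<dots> = (\<Sum>S\<in>\<tau>. \<Sum>x\<in>X. if x \<in> S then 1 else 0)" by (rule sum.swap)
  also have "\<dots> = (\<Sum>S\<in>\<tau>. r)"
  proof (rule sum.cong)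
    fix S assume "S \<in> \<tau>"
    then have "S \<subseteq> X" "card S = r" using assms by (auto simp: r_subsets_def)
    then show "(\<Sum>x\<in>X. if x \<in> S then 1 else 0) = r"
    proof -
      have "(\<Sum>x\<in>X. if x \<in> S then 1 else 0) = (\<Sum>x\<in>{x \<in> X. x \<in> S}. 1)"
        by (rule sum.inter_filter[OF assms(1), symmetric])
      also have "{x \<in> X. x \<in> S} = S" using \<open>S \<subseteq> X\<close> by blast
      also have "(\<Sum>x\<in>S. 1) = card S" by (rule card_eq_sum[symmetric])
      finally show ?thesis using \<open>card S = r\<close> by simp
    qed
  qed simp
  finally show ?thesis by simp
qed

theorem lemma1:
  fixes X :: "'a set" and \<tau> :: "'a set set" and n r :: nat
  assumes "finite X" and "n = card X" and "r \<ge> 2"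
    and "\<tau> \<noteq> {}" and "\<tau> \<subseteq> r_subsets X r" and "L \<tau> = X"
    and "thin r \<tau>"
  shows "int (card \<tau>) \<le> int n - int r + 1
    \<and> (\<exists>x\<in>X. n_count \<tau> x \<le> r - 1)
    \<and> (\<forall>B. B \<subseteq> X \<and> card B = r - 1 \<longrightarrow> has_sdr \<tau> (\<lambda>S. S - B))"
proof -
  have sub: "\<tau> \<subseteq> Pow X" using assms(5) by (auto simp: r_subsets_def)
  have ft: "finite \<tau>" using finite_subset[OF sub] assms(1) by simp
  have e: "exc r \<tau> \<ge> 0" using assms(7,4) by (auto simp: thin_def)
  have i: "int (card \<tau>) \<le> int n - int r + 1"
    using e assms(2,6) by (simp add: exc_def)
  have ii: "\<exists>x\<in>X. n_count \<tau> x \<le> r - 1"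
  proof (rule ccontr)
    assume "\<not> ?thesis"
    then have "\<forall>x\<in>X. r \<le> n_count \<tau> x" by auto
    then have "(\<Sum>x\<in>X. r) \<le> (\<Sum>x\<in>X. n_count \<tau> x)" by (intro sum_mono) auto
    then have "r * n \<le> r * card \<tau>" using sum_ncount[OF assms(1,5)] assms(2) by (simp add: mult.commute)
    then have "n \<le> card \<tau>" using assms(3) by simp
    then show False using i assms(3) by linarith
  qed
  have iii: "has_sdr \<tau> (\<lambda>S. S - B)" if B: "B \<subseteq> X" "card B = r - 1" for B
    unfolding has_sdr_def
  proof (rule hall)
    show "finite \<tau>" by fact
    show "\<forall>S\<in>\<tau>. finite (S - B)"
    proof
      fix S assume "S \<in> \<tau>"
      then have "S \<subseteq> X" using sub by blast
      then show "finite (S - B)" using finite_subset[OF _ assms(1)] by blast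
    qed
    show "\<forall>J\<subseteq>\<tau>. card J \<le> card (\<Union>((\<lambda>S. S - B)`J))"
    proof (intro allI impI)
      fix J assume J: "J \<subseteq> \<tau>"
      show "card J \<le> card (\<Union>((\<lambda>S. S - B)`J))"
      proof (cases "J = {}")
        case True then show ?thesis by simp
      next
        case False
        then have "exc r J \<ge> 0" using assms(7) J by (auto simp: thin_def)
        then have "int (card (L J)) \<ge> int (card J) + int r - 1" by (simp add: exc_def)
        moreover have "card (L J) - card B \<le> card (L J - B)"
          using finite_subset[OF B(1) assms(1)] by (rule diff_card_le_card_Diff)
        moreover have "\<Union>((\<lambda>S. S - B)`J) = L J - B" by (auto simp: L_def)
        ultimately have c1: "card (L J) - card B \<le> card (\<Union>((\<lambda>S. S - B)`J))"
          and c2: "int (card J) + int r - 1 \<le> int (card (L J))" by simp_all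
        have "card J + card B \<le> card (L J)" using c2 B(2) assms(3) by simp
        then show ?thesis using c1 by linarith
      qed
    qed
  qed
  show ?thesis using i ii iii by blast
qed

end
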